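(* Let $\Lambda$ be a set and let $(\mathcal{X},\preceq)$ be a poset in which every nonempty chain has an infimum. If $(\mathcal{X},\preceq)$ is a complete partially ordered set, then the $\Lambda$-system algebra of monotone systems over $\mathcal{X}$ is composition-order invariant; and if $(\mathcal{X},\preceq)$ is an $\omega$-chain complete partially ordered set, then the $\Lambda$-system algebra of continuous systems over $\mathcal{X}$ is composition-order invariant.
   Context: A CPO is a poset in which every chain (including the empty one) has a supremum; an $\omega$-CPO is a poset with least element in which every $\omega$-chain (sequence $(x_n)_{n\in\mathbb{N}}$ with $x_i\preceq x_j$ for $i\le j$) has a supremum. $\mathcal{X}^{\mathcal{I}}$ (functions $\mathcal{I}\to\mathcal{X}$) is ordered componentwise. A function is $\omega$-continuous if it maps suprema of $\omega$-chains to suprema of the image. The $\Lambda$-system algebra of monotone (resp. continuous) systems over $\mathcal{X}$ has as systems all monotone (resp. $\omega$-continuous) functions $s:\mathcal{X}^{\mathcal{I}}\to\mathcal{X}^{\mathcal{O}}$ for finite disjoint $\mathcal{I},\mathcal{O}\subseteq\Lambda$, with $\lambda(s)=\mathcal{I}\cup\mathcal{O}$; $\Gamma(s)=\{\{i,o\}\mid i\in\mathcal{I},o\in\mathcal{O}\}$; parallel composition $(s_1\parallel s_2)(\mathbf{x})(o_j)=s_j(\mathbf{x}|_{\mathcal{I}_j})(o_j)$ for $s_j:\mathcal{X}^{\mathcal{I}_j}\to\mathcal{X}^{\mathcal{O}_j}$ with $\mathcal{I}_1,\mathcal{I}_2,\mathcal{O}_1,\mathcal{O}_2$ pairwise disjoint;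 and interface connection $\gamma_{i,o}(s)(\mathbf{x})=s(\mathbf{x}\cup\{(i,x^* )\})|_{\mathcal{O}\setminus\{o\}}$ for $\mathbf{x}\in\mathcal{X}^{\mathcal{I}\setminus\{i\}}$, where $x^*$ is the least $x_i\in\mathcal{X}$ with $s(\mathbf{x}\cup\{(i,x_i)\})(o)=x_i$. Composition-order invariance means: (i) for all $s$, $\{i,o\}\in\Gamma(s)$, $\{i',o'\}\in\Gamma(\gamma_{i,o}(s))$ we have $\{i',o'\}\in\Gamma(s)$, $\{i,o\}\in\Gamma(\gamma_{i',o'}(s))$ and $\gamma_{i',o'}(\gamma_{i,o}(s))=\gamma_{i,o}(\gamma_{i',o'}(s))$; (ii) $\parallel$ is associative and commutative; (iii) $\gamma_{i,o}(s_1)\parallel s_2=\gamma_{i,o}(s_1\parallel s_2)$ whenever $\lambda(s_1)\cap\lambda(s_2)=\emptyset$ and $\{i,o\}\in\Gamma(s_1)$. *)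

theory Defs
  imports Main
begin

(* Systems: (I, O, f) with I the input labels, O the output labels and
   f : X^I -> X^O.  Elements of X^I are partial maps with domain exactly I.
   To make HOL equality of systems coincide with equality of the underlying
   mathematical functions, f is required to return Map.empty on arguments
   whose domain is not I (canonical extension). *)

type_synonym ('l, 'x) sys = "'l set \<times> 'l set \<times> (('l \<rightharpoonup> 'x) \<Rightarrow> ('l \<rightharpoonup> 'x))"

definition ins :: "('l, 'x) sys \<Rightarrow> 'l set" where "ins s = fst s"
definition outs :: "('l, 'x) sys \<Rightarrow> 'l set" where "outs s = fst (snd s)"
definition fn :: "('l, 'x) sys \<Rightarrow> ('l \<rightharpoonup> 'x) \<Rightarrow> ('l \<rightharpoonup> 'x)" where "fn s = snd (snd s)"

definition is_sup :: "'x::order set \<Rightarrow> 'x \<Rightarrow> bool" where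
  "is_sup A a \<longleftrightarrow> (\<forall>y\<in>A. y \<le> a) \<and> (\<forall>b. (\<forall>y\<in>A. y \<le> b) \<longrightarrow> a \<le> b)"

definition is_inf :: "'x::order set \<Rightarrow> 'x \<Rightarrow> bool" where
  "is_inf A a \<longleftrightarrow> (\<forall>y\<in>A. a \<le> y) \<and> (\<forall>b. (\<forall>y\<in>A. b \<le> y) \<longrightarrow> b \<le> a)"

definition is_cpo :: "'x::order itself \<Rightarrow> bool" where
  "is_cpo _ \<longleftrightarrow> (\<forall>C::'x set. Complete_Partial_Order.chain (\<le>) C \<longrightarrow> (\<exists>a. is_sup C a))"

definition is_omega_cpo :: "'x::order itself \<Rightarrow> bool" where
  "is_omega_cpo _ \<longleftrightarrow> (\<exists>b::'x. \<forall>x. b \<le> x) \<and>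
     (\<forall>c::nat \<Rightarrow> 'x. (\<forall>i j. i \<le> j \<longrightarrow> c i \<le> c j) \<longrightarrow> (\<exists>a. is_sup (range c) a))"

definition nonempty_chains_have_inf :: "'x::order itself \<Rightarrow> bool" where
  "nonempty_chains_have_inf _ \<longleftrightarrow>
     (\<forall>C::'x set. C \<noteq> {} \<and> Complete_Partial_Order.chain (\<le>) C \<longrightarrow> (\<exists>a. is_inf C a))"

definition asg_le :: "('l \<rightharpoonup> 'x::order) \<Rightarrow> ('l \<rightharpoonup> 'x) \<Rightarrow> bool" where
  "asg_le x y \<longleftrightarrow> dom x = dom y \<and> (\<forall>l\<in>dom x. the (x l) \<le> the (y l))"

definition asg_sup :: "'l set \<Rightarrow> ('l \<rightharpoonup> 'x::order) set \<Rightarrow> ('l \<rightharpoonup> 'x) \<Rightarrow> bool" where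
  "asg_sup D A a \<longleftrightarrow> dom a = D \<and> (\<forall>y\<in>A. asg_le y a) \<and>
     (\<forall>b. dom b = D \<and> (\<forall>y\<in>A. asg_le y b) \<longrightarrow> asg_le a b)"

definition wf_sys :: "'l set \<Rightarrow> ('l, 'x) sys \<Rightarrow> bool" where
  "wf_sys \<Lambda> s \<longleftrightarrow> finite (ins s) \<and> finite (outs s) \<and> ins s \<subseteq> \<Lambda> \<and> outs s \<subseteq> \<Lambda> \<and>
     ins s \<inter> outs s = {} \<and>
     (\<forall>x. dom x = ins s \<longrightarrow> dom (fn s x) = outs s) \<and>
     (\<forall>x. dom x \<noteq> ins s \<longrightarrow> fn s x = Map.empty)"

definition mono_sys :: "'l set \<Rightarrow> ('l, 'x::order) sys set" where
  "mono_sys \<Lambda> = {s. wf_sys \<Lambda> s \<and>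
     (\<forall>x y. dom x = ins s \<and> dom y = ins s \<and> asg_le x y \<longrightarrow> asg_le (fn s x) (fn s y))}"

definition cont_sys :: "'l set \<Rightarrow> ('l, 'x::order) sys set" where
  "cont_sys \<Lambda> = {s. wf_sys \<Lambda> s \<and>
     (\<forall>(c::nat \<Rightarrow> 'l \<rightharpoonup> 'x) a. (\<forall>n. dom (c n) = ins s) \<and> (\<forall>m n. m \<le> n \<longrightarrow> asg_le (c m) (c n)) \<and>
            asg_sup (ins s) (range c) a
        \<longrightarrow> asg_sup (outs s) (fn s ` range c) (fn s a))}"

definition lam :: "('l, 'x) sys \<Rightarrow> 'l set" where
  "lam s = ins s \<union> outs s"

definition Gam :: "('l, 'x) sys \<Rightarrow> 'l set set" where
  "Gam s = {{i, o'} | i o'. i \<in> ins s \<and> o' \<in> outs s}"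

definition par :: "('l, 'x) sys \<Rightarrow> ('l, 'x) sys \<Rightarrow> ('l, 'x) sys" where
  "par s1 s2 = (ins s1 \<union> ins s2, outs s1 \<union> outs s2,
     \<lambda>x. if dom x = ins s1 \<union> ins s2
          then fn s1 (x |` ins s1) ++ fn s2 (x |` ins s2) else Map.empty)"

definition fixval :: "('l, 'x::order) sys \<Rightarrow> ('l \<rightharpoonup> 'x) \<Rightarrow> 'l \<Rightarrow> 'l \<Rightarrow> 'x" where
  "fixval s x i o' = (LEAST v. the (fn s (x(i \<mapsto> v)) o') = v)"

definition conn0 :: "('l, 'x::order) sys \<Rightarrow> 'l \<Rightarrow> 'l \<Rightarrow> ('l, 'x) sys" where
  "conn0 s i o' = (ins s - {i}, outs s - {o'},
     \<lambda>x. if dom x = ins s - {i}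
          then fn s (x(i \<mapsto> fixval s x i o')) |` (outs s - {o'}) else Map.empty)"

(* gamma_{i,o}: connection of the interface pair {i,o}; the pair is unordered,
   so whichever of the two labels is the input is used as the input *)
definition conn :: "('l, 'x::order) sys \<Rightarrow> 'l \<Rightarrow> 'l \<Rightarrow> ('l, 'x) sys" where
  "conn s i o' = (if i \<in> ins s \<and> o' \<in> outs s then conn0 s i o'
                  else if o' \<in> ins s \<and> i \<in> outs s then conn0 s o' i else s)"

definition comp_order_invariant :: "('l, 'x::order) sys set \<Rightarrow> bool" where
  "comp_order_invariant S \<longleftrightarrow>
     (\<forall>s\<in>S. \<forall>i o' i' o''. {i, o'} \<in> Gam s \<and> {i', o''} \<in> Gam (conn s i o') \<longrightarrow>
         {i', o''} \<in> Gam s \<and> {i, o'} \<in> Gam (conn s i' o'') \<and>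
         conn (conn s i o') i' o'' = conn (conn s i' o'') i o') \<and>
     (\<forall>s1\<in>S. \<forall>s2\<in>S. \<forall>s3\<in>S.
         lam s1 \<inter> lam s2 = {} \<and> lam s1 \<inter> lam s3 = {} \<and> lam s2 \<inter> lam s3 = {} \<longrightarrow>
         par (par s1 s2) s3 = par s1 (par s2 s3)) \<and>
     (\<forall>s1\<in>S. \<forall>s2\<in>S. lam s1 \<inter> lam s2 = {} \<longrightarrow> par s1 s2 = par s2 s1) \<and>
     (\<forall>s1\<in>S. \<forall>s2\<in>S. \<forall>i o'. lam s1 \<inter> lam s2 = {} \<and> {i, o'} \<in> Gam s1 \<longrightarrow>
         par (conn s1 i o') s2 = conn (par s1 s2) i o')"

end

theory Submission imports Defs "HOL-Library.Product_Order" begin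

definition lfp_prop :: "('x::order \<Rightarrow> 'x) \<Rightarrow> 'x \<Rightarrow> bool" where
  "lfp_prop g z \<longleftrightarrow> g z = z \<and> (\<forall>y. g y \<le> y \<longrightarrow> z \<le> y)"

lemma lfp_prop_Least: "lfp_prop g z \<Longrightarrow> (LEAST v. g v = v) = z"
  unfolding lfp_prop_def by (intro Least_equality) auto

lemma cpo_lfp:
  fixes g :: "'x::order \<Rightarrow> 'x"
  assumes cpo: "is_cpo TYPE('x)" and m: "\<And>x y. x \<le> y \<Longrightarrow> g x \<le> g y"
  shows "\<exists>z. lfp_prop g z"
proof -
  define S where "S = (\<lambda>A::'x set. SOME a. is_sup A a)"
  have S: "Complete_Partial_Order.chain (\<le>) A \<Longrightarrow> is_sup A (S A)" for A
    using cpo unfolding is_cpo_def S_def by (metis someI_ex)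
  interpret c: ccpo S "(\<le>)" "(<)"
    by unfold_locales (use S in \<open>auto simp: is_sup_def\<close>)
  have mo: "monotone (\<le>) (\<le>) g" using m by (simp add: monotone_def)
  show ?thesis unfolding lfp_prop_def
    using c.fixp_unfold[OF mo] c.fixp_lowerbound[OF mo] by metis
qed

lemma is_sup_unique: "is_sup A a \<Longrightarrow> is_sup A b \<Longrightarrow> a = b"
  unfolding is_sup_def by (meson order.antisym)

definition ochain :: "(nat \<Rightarrow> 'x::order) \<Rightarrow> bool" where
  "ochain c \<longleftrightarrow> (\<forall>i j. i \<le> j \<longrightarrow> c i \<le> c j)"

lemma kleene:
  fixes g :: "'a::order \<Rightarrow> 'a" and bt :: 'a
  assumes bot: "\<forall>x. bt \<le> x"
  and sups: "\<forall>c::nat\<Rightarrow>'a. ochain c \<longrightarrow> (\<exists>a. is_sup (range c) a)"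
  and m: "\<And>x y. x \<le> y \<Longrightarrow> g x \<le> g y"
  and cont: "\<And>c a. ochain c \<Longrightarrow> is_sup (range c) a \<Longrightarrow> is_sup (range (\<lambda>n. g (c n))) (g a)"
  shows "\<exists>z. lfp_prop g z"
proof -
  define c where "c n = (g ^^ n) bt" for n
  have step: "c n \<le> c (Suc n)" for n
    by (induction n) (auto simp: c_def bot m)
  have ch: "ochain c" unfolding ochain_def using lift_Suc_mono_le[of c, OF step] by blast
  then obtain a where a: "is_sup (range c) a" using sups by blast
  have ga: "is_sup (range (\<lambda>n. g (c n))) (g a)" using cont[OF ch a] .
  have gc: "(\<lambda>n. g (c n)) = (\<lambda>n. c (Suc n))" by (simp add: c_def)
  have "is_sup (range (\<lambda>n. c (Suc n))) a"
    using a unfolding is_sup_def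
    by (metis (no_types, lifting) bot c_def funpow_0 not0_implies_Suc range_eqI rangeE)
  hence fix1: "g a = a" using ga gc is_sup_unique by metis
  have "g y \<le> y \<Longrightarrow> c n \<le> y" for y n
    by (induction n) (auto simp: c_def bot intro: order.trans[OF m])
  hence "g y \<le> y \<Longrightarrow> a \<le> y" for y using a unfolding is_sup_def by blast
  thus ?thesis using fix1 unfolding lfp_prop_def by blast
qed

lemma is_sup_prod:
  fixes p :: "nat \<Rightarrow> 'a::order \<times> 'b::order"
  shows "is_sup (range p) (u, w) \<longleftrightarrow> is_sup (range (\<lambda>n. fst (p n))) u \<and> is_sup (range (\<lambda>n. snd (p n))) w"
  unfolding is_sup_def less_eq_prod_def
  by (auto) (metis fst_conv snd_conv)+

lemma bekic:
  fixes f1 f2 :: "'x::order \<Rightarrow> 'x \<Rightarrow> 'x"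
  assumes m1: "\<And>u u' w w'. u \<le> u' \<Longrightarrow> w \<le> w' \<Longrightarrow> f1 u w \<le> f1 u' w'"
  and m2: "\<And>u u' w w'. u \<le> u' \<Longrightarrow> w \<le> w' \<Longrightarrow> f2 u w \<le> f2 u' w'"
  and H1: "\<And>w. \<exists>u. lfp_prop (\<lambda>u. f1 u w) u"
  and H2: "\<And>u. \<exists>w. lfp_prop (\<lambda>w. f2 u w) w"
  and J: "\<exists>u0 w0. f1 u0 w0 = u0 \<and> f2 u0 w0 = w0 \<and> (\<forall>u w. f1 u w \<le> u \<longrightarrow> f2 u w \<le> w \<longrightarrow> u0 \<le> u \<and> w0 \<le> w)"
  shows "(LEAST u. f1 u (LEAST w. f2 (LEAST u. f1 u w = u) w = w) = u) = (LEAST u. f1 u (LEAST w. f2 u w = w) = u)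
     \<and> (LEAST w. f2 (LEAST u. f1 u w = u) w = w) = (LEAST w. f2 (LEAST u. f1 u (LEAST w. f2 u w = w) = u) w = w)"
proof -
  define us where "us \<equiv> \<lambda>w. LEAST u. f1 u w = u"
  define ws where "ws \<equiv> LEAST w. f2 (us w) w = w"
  define wp where "wp \<equiv> \<lambda>u. LEAST w. f2 u w = w"
  define up where "up \<equiv> LEAST u. f1 u (wp u) = u"
  obtain u0 w0 where f1: "f1 u0 w0 = u0" and f2: "f2 u0 w0 = w0"
    and le: "\<And>u w. f1 u w \<le> u \<Longrightarrow> f2 u w \<le> w \<Longrightarrow> u0 \<le> u \<and> w0 \<le> w" using J by blast
  have us: "lfp_prop (\<lambda>u. f1 u w) (us w)" for w
    using H1[of w] lfp_prop_Least unfolding us_def by metis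
  have wp: "lfp_prop (\<lambda>w. f2 u w) (wp u)" for u
    using H2[of u] lfp_prop_Least unfolding wp_def by metis
  have usw0: "us w0 = u0"
  proof (rule order.antisym)
    show "us w0 \<le> u0" using us[of w0] f1 unfolding lfp_prop_def by auto
    have "f2 (us w0) w0 \<le> w0" using m2[of "us w0" u0 w0 w0] \<open>us w0 \<le> u0\<close> f2 by auto
    moreover have "f1 (us w0) w0 = us w0" using us[of w0] unfolding lfp_prop_def by auto
    ultimately show "u0 \<le> us w0" using le[of "us w0" w0] by auto
  qed
  have wpu0: "wp u0 = w0"
  proof (rule order.antisym)
    show "wp u0 \<le> w0" using wp[of u0] f2 unfolding lfp_prop_def by auto
    have "f1 u0 (wp u0) \<le> u0" using m1[of u0 u0 "wp u0" w0] \<open>wp u0 \<le> w0\<close> f1 by auto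
    moreover have "f2 u0 (wp u0) = wp u0" using wp[of u0] unfolding lfp_prop_def by auto
    ultimately show "w0 \<le> wp u0" using le[of u0 "wp u0"] by auto
  qed
  have "ws = w0" unfolding ws_def
  proof (rule Least_equality)
    show "f2 (us w0) w0 = w0" using usw0 f2 by simp
    fix w assume "f2 (us w) w = w"
    moreover have "f1 (us w) w = us w" using us[of w] unfolding lfp_prop_def by auto
    ultimately show "w0 \<le> w" using le[of "us w" w] by auto
  qed
  moreover have "up = u0" unfolding up_def
  proof (rule Least_equality)
    show "f1 u0 (wp u0) = u0" using wpu0 f1 by simp
    fix u assume "f1 u (wp u) = u"
    moreover have "f2 u (wp u) = wp u" using wp[of u] unfolding lfp_prop_def by auto
    ultimately show "u0 \<le> u" using le[of u "wp u"] by auto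
  qed
  ultimately have "us ws = up \<and> ws = wp up" using usw0 wpu0 by simp
  thus ?thesis unfolding us_def ws_def wp_def up_def .
qed

lemma J_mono:
  fixes f1 f2 :: "'x::order \<Rightarrow> 'x \<Rightarrow> 'x"
  assumes m1: "\<And>u u' w w'. u \<le> u' \<Longrightarrow> w \<le> w' \<Longrightarrow> f1 u w \<le> f1 u' w'"
  and m2: "\<And>u u' w w'. u \<le> u' \<Longrightarrow> w \<le> w' \<Longrightarrow> f2 u w \<le> f2 u' w'"
  and H1: "\<And>w. \<exists>u. lfp_prop (\<lambda>u. f1 u w) u"
  and L: "\<And>g::'x\<Rightarrow>'x. (\<And>x y. x \<le> y \<Longrightarrow> g x \<le> g y) \<Longrightarrow> \<exists>z. lfp_prop g z"
  shows "\<exists>u0 w0. f1 u0 w0 = u0 \<and> f2 u0 w0 = w0 \<and> (\<forall>u w. f1 u w \<le> u \<longrightarrow> f2 u w \<le> w \<longrightarrow> u0 \<le> u \<and> w0 \<le> w)"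
proof -
  obtain us where us: "\<And>w. lfp_prop (\<lambda>u. f1 u w) (us w)" using H1 by metis
  have usm: "w \<le> w' \<Longrightarrow> us w \<le> us w'" for w w'
    using us[of w] us[of w'] m1[of "us w'" "us w'" w w'] unfolding lfp_prop_def by auto
  obtain w0 where w0: "lfp_prop (\<lambda>w. f2 (us w) w) w0"
    using L[of "\<lambda>w. f2 (us w) w"] usm m2 by blast
  show ?thesis
  proof (intro exI conjI allI impI)
    show "f1 (us w0) w0 = us w0" using us unfolding lfp_prop_def by auto
    show "f2 (us w0) w0 = w0" using w0 unfolding lfp_prop_def by auto
    fix u w assume a: "f1 u w \<le> u" "f2 u w \<le> w"
    have "us w \<le> u" using us[of w] a unfolding lfp_prop_def by auto
    hence "f2 (us w) w \<le> w" using m2[of "us w" u w w] a by auto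
    hence "w0 \<le> w" using w0 unfolding lfp_prop_def by auto
    thus "us w0 \<le> u" using usm \<open>us w \<le> u\<close> by (meson order.trans)
    show "w0 \<le> w" by fact
  qed
qed

lemma sys_eqI: "ins s = ins t \<Longrightarrow> outs s = outs t \<Longrightarrow> fn s = fn t \<Longrightarrow> s = t"
  unfolding ins_def outs_def fn_def by (simp add: prod_eq_iff)

lemma ins_conn0[simp]: "ins (conn0 s i o') = ins s - {i}"
  and outs_conn0[simp]: "outs (conn0 s i o') = outs s - {o'}"
  and fn_conn0: "fn (conn0 s i o') x = (if dom x = ins s - {i}
          then fn s (x(i \<mapsto> fixval s x i o')) |` (outs s - {o'}) else Map.empty)"
  unfolding conn0_def ins_def outs_def fn_def by auto

lemma ins_par[simp]: "ins (par s t) = ins s \<union> ins t"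
  and outs_par[simp]: "outs (par s t) = outs s \<union> outs t"
  and fn_par: "fn (par s t) x = (if dom x = ins s \<union> ins t
          then fn s (x |` ins s) ++ fn t (x |` ins t) else Map.empty)"
  unfolding par_def ins_def outs_def fn_def by auto

definition bek_concl :: "('x::order \<Rightarrow> 'x \<Rightarrow> 'x) \<Rightarrow> ('x \<Rightarrow> 'x \<Rightarrow> 'x) \<Rightarrow> bool" where
  "bek_concl f1 f2 \<longleftrightarrow> (LEAST u. f1 u (LEAST w. f2 (LEAST u. f1 u w = u) w = w) = u) = (LEAST u. f1 u (LEAST w. f2 u w = w) = u)
     \<and> (LEAST w. f2 (LEAST u. f1 u w = u) w = w) = (LEAST w. f2 (LEAST u. f1 u (LEAST w. f2 u w = w) = u) w = w)"

lemma key_comm: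
  fixes s :: "('l, 'x::order) sys"
  assumes wf: "wf_sys \<Lambda> s" and ab: "a \<in> ins s" "b \<in> ins s" "a \<noteq> b"
    and al: "\<alpha> \<in> outs s" "\<beta> \<in> outs s" "\<alpha> \<noteq> \<beta>"
    and BK: "\<And>x. dom x = ins s - {a} - {b} \<Longrightarrow>
        bek_concl (\<lambda>u w. the (fn s ((x(b \<mapsto> w))(a \<mapsto> u)) \<alpha>)) (\<lambda>u w. the (fn s ((x(b \<mapsto> w))(a \<mapsto> u)) \<beta>))"
  shows "conn0 (conn0 s a \<alpha>) b \<beta> = conn0 (conn0 s b \<beta>) a \<alpha>"
proof (rule sys_eqI)
  show "ins (conn0 (conn0 s a \<alpha>) b \<beta>) = ins (conn0 (conn0 s b \<beta>) a \<alpha>)" by auto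
  show "outs (conn0 (conn0 s a \<alpha>) b \<beta>) = outs (conn0 (conn0 s b \<beta>) a \<alpha>)" by auto
  show "fn (conn0 (conn0 s a \<alpha>) b \<beta>) = fn (conn0 (conn0 s b \<beta>) a \<alpha>)"
  proof (rule ext)
    fix x :: "'l \<rightharpoonup> 'x"
    show "fn (conn0 (conn0 s a \<alpha>) b \<beta>) x = fn (conn0 (conn0 s b \<beta>) a \<alpha>) x"
    proof (cases "dom x = ins s - {a} - {b}")
      case False
      hence "dom x \<noteq> ins s - {b} - {a}" by (metis Diff_insert2 insert_commute)
      thus ?thesis using False by (simp add: fn_conn0)
    next
      case True
      hence dx2: "dom x = ins s - {b} - {a}" by (metis Diff_insert2 insert_commute)
      define f1 where "f1 = (\<lambda>u w. the (fn s ((x(b \<mapsto> w))(a \<mapsto> u)) \<alpha>))"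
      define f2 where "f2 = (\<lambda>u w. the (fn s ((x(b \<mapsto> w))(a \<mapsto> u)) \<beta>))"
      have B: "bek_concl f1 f2" using BK[OF True] unfolding f1_def f2_def .
      have d1: "dom (x(b \<mapsto> w)) = ins s - {a}" for w using True ab by auto
      have d2: "dom (x(a \<mapsto> u)) = ins s - {b}" for u using True ab by auto
      have tw: "(x(a \<mapsto> u))(b \<mapsto> w) = (x(b \<mapsto> w))(a \<mapsto> u)" for u w using ab by (simp add: fun_upd_twist)
      define us where "us = (\<lambda>w. LEAST u. f1 u w = u)"
      define wp where "wp = (\<lambda>u. LEAST w. f2 u w = w)"
      have fv1: "fixval s (x(b \<mapsto> w)) a \<alpha> = us w" for w
        unfolding fixval_def us_def f1_def ..
      have fv2: "fixval s (x(a \<mapsto> u)) b \<beta> = wp u" for u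
        unfolding fixval_def wp_def f2_def by (simp add: tw)
      have W: "fixval (conn0 s a \<alpha>) x b \<beta> = (LEAST w. f2 (us w) w = w)"
        unfolding fixval_def using d1 al by (simp add: fn_conn0 fv1 f2_def)
      have U: "fixval (conn0 s b \<beta>) x a \<alpha> = (LEAST u. f1 u (wp u) = u)"
        unfolding fixval_def using d2 al by (simp add: fn_conn0 fv2 f1_def tw)
      have Beq: "us (LEAST w. f2 (us w) w = w) = (LEAST u. f1 u (wp u) = u)"
           "(LEAST w. f2 (us w) w = w) = wp (LEAST u. f1 u (wp u) = u)"
        using B unfolding bek_concl_def us_def wp_def by auto
      have "fn (conn0 (conn0 s a \<alpha>) b \<beta>) x =
          fn s ((x(b \<mapsto> (LEAST w. f2 (us w) w = w)))(a \<mapsto> us (LEAST w. f2 (us w) w = w))) |` (outs s - {\<alpha>} - {\<beta>})"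
        using True d1 by (simp add: fn_conn0 W fv1 Int_absorb1 Diff_subset)
      also have "\<dots> = fn s ((x(a \<mapsto> (LEAST u. f1 u (wp u) = u)))(b \<mapsto> wp (LEAST u. f1 u (wp u) = u))) |` (outs s - {\<beta>} - {\<alpha>})"
        using Beq tw by (metis Diff_insert2 insert_commute)
      also have "\<dots> = fn (conn0 (conn0 s b \<beta>) a \<alpha>) x"
        using dx2 d2 by (simp add: fn_conn0 U fv2 Int_absorb1 Diff_subset)
      finally show ?thesis .
    qed
  qed
qed

definition msys :: "('l, 'x::order) sys \<Rightarrow> bool" where
  "msys s \<longleftrightarrow> (\<forall>x y. dom x = ins s \<and> dom y = ins s \<and> asg_le x y \<longrightarrow> asg_le (fn s x) (fn s y))"

lemma msysD: "msys s \<Longrightarrow> dom x = ins s \<Longrightarrow> dom y = ins s \<Longrightarrow> asg_le x y \<Longrightarrow> asg_le (fn s x) (fn s y)"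
  unfolding msys_def by (erule allE[of _ x], erule allE[of _ y]) simp

lemma contD:
  fixes s :: "('l, 'x::order) sys" and c :: "nat \<Rightarrow> 'l \<rightharpoonup> 'x"
  assumes s: "s \<in> cont_sys \<Lambda>" and h: "\<forall>n. dom (c n) = ins s" "\<forall>m n. m \<le> n \<longrightarrow> asg_le (c m) (c n)"
   "asg_sup (ins s) (range c) a"
  shows "asg_sup (outs s) (fn s ` range c) (fn s a)"
proof -
  have "\<forall>(c::nat \<Rightarrow> 'l \<rightharpoonup> 'x) a. (\<forall>n. dom (c n) = ins s) \<and> (\<forall>m n. m \<le> n \<longrightarrow> asg_le (c m) (c n)) \<and>
            asg_sup (ins s) (range c) a
        \<longrightarrow> asg_sup (outs s) (fn s ` range c) (fn s a)" using s unfolding cont_sys_def by simp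
  thus ?thesis using h by simp
qed

lemma mono_sys_msys: "s \<in> mono_sys \<Lambda> \<Longrightarrow> msys s"
  unfolding mono_sys_def msys_def by auto

lemma asg_le_refl: "asg_le x x" unfolding asg_le_def by auto

lemma cont_sys_msys:
  fixes s :: "('l, 'x::order) sys"
  shows "s \<in> cont_sys \<Lambda> \<Longrightarrow> msys s"
  unfolding msys_def
proof (intro allI impI, elim conjE)
  fix x y :: "'l \<rightharpoonup> 'x" assume s: "s \<in> cont_sys \<Lambda>" and dx: "dom x = ins s" and dy: "dom y = ins s" and le: "asg_le x y"
  define c where "c n = (if n = 0 then x else y)" for n :: nat
  have dc: "\<forall>n. dom (c n) = ins s" using dx dy by (simp add: c_def)
  have ch: "\<forall>m n. m \<le> n \<longrightarrow> asg_le (c m) (c n)" using le by (auto simp: c_def asg_le_refl)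
  have rc: "range c = {x, y}" by (auto simp: c_def image_def)
  have su: "asg_sup (ins s) (range c) y"
    unfolding rc asg_sup_def using dy le by (auto simp: asg_le_refl)
  have "asg_sup (outs s) (fn s ` range c) (fn s y)"
    using s dc ch su unfolding cont_sys_def by blast
  thus "asg_le (fn s x) (fn s y)" unfolding asg_sup_def rc by auto
qed

lemma asg_sup_comp:
  assumes "\<forall>n. dom (c n) = D" "dom m = D" "\<forall>l\<in>D. is_sup (range (\<lambda>n. the (c n l))) (the (m l))"
  shows "asg_sup D (range c) m"
  unfolding asg_sup_def
proof (intro conjI allI impI ballI)
  show "dom m = D" by fact
  fix y assume "y \<in> range c"
  then obtain n where y: "y = c n" by auto
  show "asg_le y m" unfolding asg_le_def y
  proof (intro conjI ballI)
    show "dom (c n) = dom m" using assms by simp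
    fix l assume "l \<in> dom (c n)"
    hence "l \<in> D" using assms by simp
    hence "is_sup (range (\<lambda>n. the (c n l))) (the (m l))" using assms by blast
    thus "the (c n l) \<le> the (m l)" unfolding is_sup_def by blast
  qed
next
  fix b assume b: "dom b = D \<and> (\<forall>y\<in>range c. asg_le y b)"
  show "asg_le m b" unfolding asg_le_def
  proof (intro conjI ballI)
    show "dom m = dom b" using assms b by simp
    fix l assume "l \<in> dom m"
    hence l: "l \<in> D" using assms by simp
    hence s: "is_sup (range (\<lambda>n. the (c n l))) (the (m l))" using assms by blast
    have "\<forall>v\<in>range (\<lambda>n. the (c n l)). v \<le> the (b l)"
    proof
      fix v assume "v \<in> range (\<lambda>n. the (c n l))"
      then obtain n where v: "v = the (c n l)" by auto
      have "asg_le (c n) b" using b by blast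
      thus "v \<le> the (b l)" unfolding asg_le_def v using l assms by auto
    qed
    thus "the (m l) \<le> the (b l)" using s unfolding is_sup_def by blast
  qed
qed

lemma comp_asg_sup:
  assumes su: "asg_sup D A m" and l: "l \<in> D" and dA: "\<forall>y\<in>A. dom y = D"
  shows "is_sup ((\<lambda>y. the (y l)) ` A) (the (m l))"
  unfolding is_sup_def
proof (intro conjI allI impI ballI)
  have dm: "dom m = D" and up: "\<forall>y\<in>A. asg_le y m"
    and lst: "\<And>b. dom b = D \<Longrightarrow> (\<forall>y\<in>A. asg_le y b) \<Longrightarrow> asg_le m b"
    using su unfolding asg_sup_def by blast+
  {
  fix v assume "v \<in> (\<lambda>y. the (y l)) ` A"
  then obtain y where y: "y \<in> A" "v = the (y l)" by blast
  have "asg_le y m" using up y by blast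
  moreover have "l \<in> dom y" using dA y l by blast
  ultimately show "v \<le> the (m l)" unfolding asg_le_def y(2) by blast
  }
  fix b assume ub: "\<forall>v\<in>(\<lambda>y. the (y l)) ` A. v \<le> b"
  have "dom (m(l \<mapsto> b)) = D" using dm l by auto
  moreover have "\<forall>y\<in>A. asg_le y (m(l \<mapsto> b))"
  proof
    fix y assume y: "y \<in> A"
    have le: "asg_le y m" using up y by blast
    show "asg_le y (m(l \<mapsto> b))" unfolding asg_le_def
    proof (intro conjI ballI)
      show "dom y = dom (m(l \<mapsto> b))" using dA y dm l by auto
      fix l' assume l': "l' \<in> dom y"
      show "the (y l') \<le> the ((m(l \<mapsto> b)) l')"
      proof (cases "l' = l")
        case True thus ?thesis using ub y by simp
      next
        case False thus ?thesis using le l' unfolding asg_le_def by simp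
      qed
    qed
  qed
  ultimately have "asg_le m (m(l \<mapsto> b))" using lst by blast
  hence "the (m l) \<le> the ((m(l \<mapsto> b)) l)" unfolding asg_le_def using dm l by blast
  thus "the (m l) \<le> b" by simp
qed

lemma is_sup_const: "is_sup (range (\<lambda>n::nat. v)) v"
  unfolding is_sup_def by auto

lemma P_le:
  assumes "u \<le> u'" "w \<le> w'"
  shows "asg_le ((x(b \<mapsto> w))(a \<mapsto> u)) ((x(b \<mapsto> w'))(a \<mapsto> u'))"
  using assms unfolding asg_le_def by auto

lemma P_dom: "dom x = I - {a} - {b} \<Longrightarrow> a \<in> I \<Longrightarrow> b \<in> I \<Longrightarrow> dom ((x(b \<mapsto> w))(a \<mapsto> u)) = I"
  by auto

lemma wf_dom: "wf_sys \<Lambda> s \<Longrightarrow> dom y = ins s \<Longrightarrow> dom (fn s y) = outs s"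
  unfolding wf_sys_def by auto

lemma f_mono:
  assumes wf: "wf_sys \<Lambda> s" and m: "msys s" and dx: "dom x = ins s - {a} - {b}" and ab: "a \<in> ins s" "b \<in> ins s"
    and g: "\<gamma> \<in> outs s" and le: "u \<le> u'" "w \<le> w'"
  shows "the (fn s ((x(b \<mapsto> w))(a \<mapsto> u)) \<gamma>) \<le> the (fn s ((x(b \<mapsto> w'))(a \<mapsto> u')) \<gamma>)"
proof -
  have d: "dom ((x(b \<mapsto> w))(a \<mapsto> u)) = ins s" "dom ((x(b \<mapsto> w'))(a \<mapsto> u')) = ins s"
    using P_dom[OF dx ab] by auto
  have "asg_le (fn s ((x(b \<mapsto> w))(a \<mapsto> u))) (fn s ((x(b \<mapsto> w'))(a \<mapsto> u')))"
    by (rule m[unfolded msys_def, rule_format, OF conjI[OF d(1) conjI[OF d(2) P_le[OF le]]]])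
  moreover have "\<gamma> \<in> dom (fn s ((x(b \<mapsto> w))(a \<mapsto> u)))" using wf_dom[OF wf d(1)] g by auto
  ultimately show ?thesis unfolding asg_le_def by auto
qed

lemma cont_two:
  fixes s :: "('l, 'x::order) sys"
  assumes s: "s \<in> cont_sys \<Lambda>" and dx: "dom x = ins s - {a} - {b}" and ab: "a \<in> ins s" "b \<in> ins s" "a \<noteq> b"
    and g: "\<gamma> \<in> outs s"
    and cu: "ochain cu" "is_sup (range cu) u" and cw: "ochain cw" "is_sup (range cw) w"
  shows "is_sup (range (\<lambda>n. the (fn s ((x(b \<mapsto> cw n))(a \<mapsto> cu n)) \<gamma>))) (the (fn s ((x(b \<mapsto> w))(a \<mapsto> u)) \<gamma>))"
proof -
  have wf: "wf_sys \<Lambda> s" using s unfolding cont_sys_def by auto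
  define M where "M n = (x(b \<mapsto> cw n))(a \<mapsto> cu n)" for n
  have dM: "\<forall>n. dom (M n) = ins s" using P_dom[OF dx ab(1,2)] by (simp add: M_def)
  have chM: "\<forall>m n. m \<le> n \<longrightarrow> asg_le (M m) (M n)"
    using cu cw unfolding ochain_def M_def by (auto intro: P_le)
  have "asg_sup (ins s) (range M) ((x(b \<mapsto> w))(a \<mapsto> u))"
  proof (rule asg_sup_comp)
    show "\<forall>n. dom (M n) = ins s" by fact
    show "dom ((x(b \<mapsto> w))(a \<mapsto> u)) = ins s" using P_dom[OF dx ab(1,2)] .
    show "\<forall>l\<in>ins s. is_sup (range (\<lambda>n. the (M n l))) (the (((x(b \<mapsto> w))(a \<mapsto> u)) l))"
    proof
      fix l assume "l \<in> ins s"
      consider "l = a" | "l = b" | "l \<noteq> a \<and> l \<noteq> b" by blast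
      thus "is_sup (range (\<lambda>n. the (M n l))) (the (((x(b \<mapsto> w))(a \<mapsto> u)) l))"
      proof cases
        case 1 thus ?thesis using cu(2) by (simp add: M_def)
      next
        case 2 thus ?thesis using cw(2) ab(3) by (simp add: M_def)
      next
        case 3 thus ?thesis using is_sup_const[of "the (x l)"] by (simp add: M_def)
      qed
    qed
  qed
  hence "asg_sup (outs s) (fn s ` range M) (fn s ((x(b \<mapsto> w))(a \<mapsto> u)))"
    by (rule contD[OF s dM chM])
  moreover have "\<forall>y\<in>fn s ` range M. dom y = outs s" using wf_dom[OF wf] dM by auto
  ultimately have "is_sup ((\<lambda>y. the (y \<gamma>)) ` fn s ` range M) (the (fn s ((x(b \<mapsto> w))(a \<mapsto> u)) \<gamma>))"
    by (rule comp_asg_sup[OF _ g])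
  moreover have "(\<lambda>y. the (y \<gamma>)) ` fn s ` range M = range (\<lambda>n. the (fn s ((x(b \<mapsto> cw n))(a \<mapsto> cu n)) \<gamma>))"
    unfolding M_def by auto
  ultimately show ?thesis by simp
qed

lemma BK_mono:
  fixes s :: "('l, 'x::order) sys"
  assumes cpo: "is_cpo TYPE('x)" and wf: "wf_sys \<Lambda> s" and m: "msys s"
    and dx: "dom x = ins s - {a} - {b}" and ab: "a \<in> ins s" "b \<in> ins s"
    and al: "\<alpha> \<in> outs s" "\<beta> \<in> outs s"
  shows "bek_concl (\<lambda>u w. the (fn s ((x(b \<mapsto> w))(a \<mapsto> u)) \<alpha>)) (\<lambda>u w. the (fn s ((x(b \<mapsto> w))(a \<mapsto> u)) \<beta>))"
  unfolding bek_concl_def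
proof (rule bekic)
  show m1: "\<And>u u' w w'. u \<le> u' \<Longrightarrow> w \<le> w' \<Longrightarrow> the (fn s ((x(b \<mapsto> w))(a \<mapsto> u)) \<alpha>) \<le> the (fn s ((x(b \<mapsto> w'))(a \<mapsto> u')) \<alpha>)"
    using f_mono[OF wf m dx ab al(1)] .
  show m2: "\<And>u u' w w'. u \<le> u' \<Longrightarrow> w \<le> w' \<Longrightarrow> the (fn s ((x(b \<mapsto> w))(a \<mapsto> u)) \<beta>) \<le> the (fn s ((x(b \<mapsto> w'))(a \<mapsto> u')) \<beta>)"
    using f_mono[OF wf m dx ab al(2)] .
  show H1: "\<And>w. \<exists>u. lfp_prop (\<lambda>u. the (fn s ((x(b \<mapsto> w))(a \<mapsto> u)) \<alpha>)) u"
    by (rule cpo_lfp[OF cpo], rule m1, assumption, rule order.refl)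
  show "\<And>u. \<exists>w. lfp_prop (\<lambda>w. the (fn s ((x(b \<mapsto> w))(a \<mapsto> u)) \<beta>)) w"
    by (rule cpo_lfp[OF cpo], rule m2, rule order.refl, assumption)
  show "\<exists>u0 w0. the (fn s ((x(b \<mapsto> w0))(a \<mapsto> u0)) \<alpha>) = u0 \<and> the (fn s ((x(b \<mapsto> w0))(a \<mapsto> u0)) \<beta>) = w0 \<and>
     (\<forall>u w. the (fn s ((x(b \<mapsto> w))(a \<mapsto> u)) \<alpha>) \<le> u \<longrightarrow> the (fn s ((x(b \<mapsto> w))(a \<mapsto> u)) \<beta>) \<le> w \<longrightarrow> u0 \<le> u \<and> w0 \<le> w)"
    by (rule J_mono[OF m1 m2 H1 cpo_lfp[OF cpo]])
qed

lemma ochain_const: "ochain (\<lambda>n. v)" unfolding ochain_def by auto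

lemma BK_cont:
  fixes s :: "('l, 'x::order) sys"
  assumes oc: "is_omega_cpo TYPE('x)" and s: "s \<in> cont_sys \<Lambda>"
    and dx: "dom x = ins s - {a} - {b}" and ab: "a \<in> ins s" "b \<in> ins s" "a \<noteq> b"
    and al: "\<alpha> \<in> outs s" "\<beta> \<in> outs s"
  shows "bek_concl (\<lambda>u w. the (fn s ((x(b \<mapsto> w))(a \<mapsto> u)) \<alpha>)) (\<lambda>u w. the (fn s ((x(b \<mapsto> w))(a \<mapsto> u)) \<beta>))"
proof -
  have wf: "wf_sys \<Lambda> s" using s unfolding cont_sys_def by auto
  have m: "msys s" using cont_sys_msys[OF s] .
  obtain bt :: 'x where bt: "\<forall>x. bt \<le> x" using oc unfolding is_omega_cpo_def by blast
  have sups: "\<forall>c::nat\<Rightarrow>'x. ochain c \<longrightarrow> (\<exists>a. is_sup (range c) a)"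
    using oc unfolding is_omega_cpo_def ochain_def by blast
  define f1 where "f1 = (\<lambda>u w. the (fn s ((x(b \<mapsto> w))(a \<mapsto> u)) \<alpha>))"
  define f2 where "f2 = (\<lambda>u w. the (fn s ((x(b \<mapsto> w))(a \<mapsto> u)) \<beta>))"
  have m1: "\<And>u u' w w'. u \<le> u' \<Longrightarrow> w \<le> w' \<Longrightarrow> f1 u w \<le> f1 u' w'"
    using f_mono[OF wf m dx ab(1,2) al(1)] unfolding f1_def .
  have m2: "\<And>u u' w w'. u \<le> u' \<Longrightarrow> w \<le> w' \<Longrightarrow> f2 u w \<le> f2 u' w'"
    using f_mono[OF wf m dx ab(1,2) al(2)] unfolding f2_def .
  have c1: "is_sup (range (\<lambda>n. f1 (cu n) (cw n))) (f1 u w)"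
    if "ochain cu" "is_sup (range cu) u" "ochain cw" "is_sup (range cw) w" for cu cw u w
    using cont_two[OF s dx ab al(1) that] unfolding f1_def .
  have c2: "is_sup (range (\<lambda>n. f2 (cu n) (cw n))) (f2 u w)"
    if "ochain cu" "is_sup (range cu) u" "ochain cw" "is_sup (range cw) w" for cu cw u w
    using cont_two[OF s dx ab al(2) that] unfolding f2_def .
  have H1: "\<exists>u. lfp_prop (\<lambda>u. f1 u w) u" for w
    by (rule kleene[OF bt sups], rule m1, assumption, rule order.refl, rule c1, assumption+, rule ochain_const, rule is_sup_const)
  have H2: "\<exists>w. lfp_prop (\<lambda>w. f2 u w) w" for u
    by (rule kleene[OF bt sups], rule m2, rule order.refl, assumption, rule c2, rule ochain_const, rule is_sup_const, assumption+)
  define g where "g = (\<lambda>p::'x \<times> 'x. (f1 (fst p) (snd p), f2 (fst p) (snd p)))"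
  have "\<exists>z. lfp_prop g z"
  proof (rule kleene[of "(bt, bt)"])
    show "\<forall>x. (bt, bt) \<le> x" using bt by (simp add: less_eq_prod_def)
    show "\<forall>c::nat \<Rightarrow> 'x \<times> 'x. ochain c \<longrightarrow> (\<exists>a. is_sup (range c) a)"
    proof (intro allI impI)
      fix c :: "nat \<Rightarrow> 'x \<times> 'x" assume "ochain c"
      hence "ochain (\<lambda>n. fst (c n))" "ochain (\<lambda>n. snd (c n))"
        unfolding ochain_def less_eq_prod_def by auto
      then obtain u w where "is_sup (range (\<lambda>n. fst (c n))) u" "is_sup (range (\<lambda>n. snd (c n))) w"
        using sups by blast
      thus "\<exists>a. is_sup (range c) a" using is_sup_prod by blast
    qed
    show "\<And>x y. x \<le> y \<Longrightarrow> g x \<le> g y" unfolding g_def less_eq_prod_def using m1 m2 by auto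
    fix c :: "nat \<Rightarrow> 'x \<times> 'x" and p assume ch: "ochain c" and sp: "is_sup (range c) p"
    have chs: "ochain (\<lambda>n. fst (c n))" "ochain (\<lambda>n. snd (c n))"
      using ch unfolding ochain_def less_eq_prod_def by auto
    have ss: "is_sup (range (\<lambda>n. fst (c n))) (fst p)" "is_sup (range (\<lambda>n. snd (c n))) (snd p)"
      using sp is_sup_prod[of c "fst p" "snd p"] by auto
    show "is_sup (range (\<lambda>n. g (c n))) (g p)"
      unfolding g_def using is_sup_prod c1[OF chs(1) ss(1) chs(2) ss(2)] c2[OF chs(1) ss(1) chs(2) ss(2)]
      by (simp add: is_sup_prod)
  qed
  then obtain u0 w0 where z: "lfp_prop g (u0, w0)" by (metis surj_pair)
  have J: "\<exists>u0 w0. f1 u0 w0 = u0 \<and> f2 u0 w0 = w0 \<and> (\<forall>u w. f1 u w \<le> u \<longrightarrow> f2 u w \<le> w \<longrightarrow> u0 \<le> u \<and> w0 \<le> w)"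
  proof (intro exI conjI allI impI)
    show "f1 u0 w0 = u0" "f2 u0 w0 = w0" using z unfolding lfp_prop_def g_def by auto
    fix u w assume "f1 u w \<le> u" "f2 u w \<le> w"
    hence "g (u, w) \<le> (u, w)" unfolding g_def less_eq_prod_def by auto
    hence "(u0, w0) \<le> (u, w)" using z unfolding lfp_prop_def by blast
    thus "u0 \<le> u" "w0 \<le> w" by (auto simp: less_eq_prod_def)
  qed
  have "bek_concl f1 f2" unfolding bek_concl_def by (rule bekic[OF m1 m2 H1 H2 J])
  thus ?thesis unfolding f1_def f2_def .
qed


lemma conn_eq:
  assumes d: "ins s \<inter> outs s = {}" and a: "a \<in> ins s" and al: "\<alpha> \<in> outs s" and e: "{i, o'} = {a, \<alpha>}"
  shows "conn s i o' = conn0 s a \<alpha>"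
proof -
  have "a \<noteq> \<alpha>" using d a al by auto
  hence "(i = a \<and> o' = \<alpha>) \<or> (i = \<alpha> \<and> o' = a)" using e by (auto simp: doubleton_eq_iff)
  thus ?thesis
  proof
    assume "i = a \<and> o' = \<alpha>" thus ?thesis using a al by (simp add: conn_def)
  next
    assume h: "i = \<alpha> \<and> o' = a"
    hence "i \<notin> ins s" using d al by auto
    thus ?thesis using h a al by (simp add: conn_def)
  qed
qed

lemma Gam_E:
  assumes "{i, o'} \<in> Gam s"
  obtains a \<alpha> where "a \<in> ins s" "\<alpha> \<in> outs s" "{i, o'} = {a, \<alpha>}"
  using assms unfolding Gam_def by auto

lemma Gam_I: "a \<in> ins s \<Longrightarrow> \<alpha> \<in> outs s \<Longrightarrow> {i, o'} = {a, \<alpha>} \<Longrightarrow> {i, o'} \<in> Gam s"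
  unfolding Gam_def by auto

lemma part_i:
  fixes s :: "('l, 'x::order) sys"
  assumes wf: "wf_sys \<Lambda> s"
    and HB: "\<And>a b \<alpha> \<beta> x. a \<in> ins s \<Longrightarrow> b \<in> ins s \<Longrightarrow> a \<noteq> b \<Longrightarrow> \<alpha> \<in> outs s \<Longrightarrow> \<beta> \<in> outs s \<Longrightarrow>
        dom x = ins s - {a} - {b} \<Longrightarrow>
        bek_concl (\<lambda>u w. the (fn s ((x(b \<mapsto> w))(a \<mapsto> u)) \<alpha>)) (\<lambda>u w. the (fn s ((x(b \<mapsto> w))(a \<mapsto> u)) \<beta>))"
    and g1: "{i, o'} \<in> Gam s" and g2: "{i', o''} \<in> Gam (conn s i o')"
  shows "{i', o''} \<in> Gam s \<and> {i, o'} \<in> Gam (conn s i' o'') \<and>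
         conn (conn s i o') i' o'' = conn (conn s i' o'') i o'"
proof -
  have d: "ins s \<inter> outs s = {}" using wf unfolding wf_sys_def by auto
  obtain a \<alpha> where a: "a \<in> ins s" "\<alpha> \<in> outs s" "{i, o'} = {a, \<alpha>}" using g1 by (rule Gam_E)
  have c1: "conn s i o' = conn0 s a \<alpha>" using conn_eq[OF d a] .
  obtain b \<beta> where b: "b \<in> ins s - {a}" "\<beta> \<in> outs s - {\<alpha>}" "{i', o''} = {b, \<beta>}"
    using g2 unfolding c1 by (rule Gam_E) auto
  have d1: "ins (conn0 s a \<alpha>) \<inter> outs (conn0 s a \<alpha>) = {}" using d by auto
  have c2: "conn (conn0 s a \<alpha>) i' o'' = conn0 (conn0 s a \<alpha>) b \<beta>"
    using conn_eq[OF d1 _ _ b(3)] b by auto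
  have c3: "conn s i' o'' = conn0 s b \<beta>" using conn_eq[OF d _ _ b(3)] b by auto
  have d2: "ins (conn0 s b \<beta>) \<inter> outs (conn0 s b \<beta>) = {}" using d by auto
  have c4: "conn (conn0 s b \<beta>) i o' = conn0 (conn0 s b \<beta>) a \<alpha>"
    using conn_eq[OF d2 _ _ a(3)] a b by auto
  have "{i', o''} \<in> Gam s" using b by (intro Gam_I[of b _ \<beta>]) auto
  moreover have "{i, o'} \<in> Gam (conn s i' o'')" unfolding c3 using a b by (intro Gam_I[of a _ \<alpha>]) auto
  moreover have "conn0 (conn0 s a \<alpha>) b \<beta> = conn0 (conn0 s b \<beta>) a \<alpha>"
  proof -
    have bI: "b \<in> ins s" "a \<noteq> b" using b by auto
    have bO: "\<beta> \<in> outs s" "\<alpha> \<noteq> \<beta>" using b by auto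
    show ?thesis by (rule key_comm[OF wf a(1) bI a(2) bO HB[OF a(1) bI a(2) bO(1)]])
  qed
  ultimately show ?thesis using c1 c2 c3 c4 by simp
qed

lemma par_comm:
  assumes w1: "wf_sys \<Lambda> s1" and w2: "wf_sys \<Lambda> s2" and dj: "lam s1 \<inter> lam s2 = {}"
  shows "par s1 s2 = par s2 s1"
proof (rule sys_eqI)
  show "fn (par s1 s2) = fn (par s2 s1)"
  proof
    fix x
    show "fn (par s1 s2) x = fn (par s2 s1) x"
    proof (cases "dom x = ins s1 \<union> ins s2")
      case True
      have "dom (fn s1 (x |` ins s1)) = outs s1" using wf_dom[OF w1] True by auto
      moreover have "dom (fn s2 (x |` ins s2)) = outs s2" using wf_dom[OF w2] True by auto
      ultimately have "fn s1 (x |` ins s1) ++ fn s2 (x |` ins s2) = fn s2 (x |` ins s2) ++ fn s1 (x |` ins s1)"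
        using dj by (intro map_add_comm) (auto simp: lam_def)
      thus ?thesis using True by (simp add: fn_par Un_commute)
    next
      case False thus ?thesis by (simp add: fn_par Un_commute)
    qed
  qed
qed (auto)

lemma par_assoc: "par (par s1 s2) s3 = par s1 (par s2 s3)"
proof (rule sys_eqI)
  show "fn (par (par s1 s2) s3) = fn (par s1 (par s2 s3))"
  proof
    fix x
    show "fn (par (par s1 s2) s3) x = fn (par s1 (par s2 s3)) x"
    proof (cases "dom x = ins s1 \<union> ins s2 \<union> ins s3")
      case True
      have r: "dom (x |` (ins s1 \<union> ins s2)) = ins s1 \<union> ins s2" "dom (x |` (ins s2 \<union> ins s3)) = ins s2 \<union> ins s3"
        using True by auto
      have e: "x |` (ins s1 \<union> ins s2) |` ins s1 = x |` ins s1" "x |` (ins s1 \<union> ins s2) |` ins s2 = x |` ins s2"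
         "x |` (ins s2 \<union> ins s3) |` ins s2 = x |` ins s2" "x |` (ins s2 \<union> ins s3) |` ins s3 = x |` ins s3"
        by (auto simp: restrict_map_def)
      show ?thesis using True r by (simp add: fn_par e Un_assoc)
    next
      case False thus ?thesis by (simp add: fn_par Un_assoc)
    qed
  qed
qed (auto simp: Un_assoc)

lemma par_conn0:
  fixes s1 :: "('l, 'x::order) sys"
  assumes w1: "wf_sys \<Lambda> s1" and w2: "wf_sys \<Lambda> s2" and dj: "lam s1 \<inter> lam s2 = {}"
    and a: "a \<in> ins s1" and al: "\<alpha> \<in> outs s1"
  shows "par (conn0 s1 a \<alpha>) s2 = conn0 (par s1 s2) a \<alpha>"
proof -
  have a2: "a \<notin> ins s2" "\<alpha> \<notin> outs s2" using dj a al by (auto simp: lam_def)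
  have I: "ins s1 - {a} \<union> ins s2 = ins s1 \<union> ins s2 - {a}" using a2 by auto
  have O: "outs s1 - {\<alpha>} \<union> outs s2 = outs s1 \<union> outs s2 - {\<alpha>}" using a2 by auto
  show ?thesis
  proof (rule sys_eqI)
    show "fn (par (conn0 s1 a \<alpha>) s2) = fn (conn0 (par s1 s2) a \<alpha>)"
    proof
      fix x :: "'l \<rightharpoonup> 'x"
      show "fn (par (conn0 s1 a \<alpha>) s2) x = fn (conn0 (par s1 s2) a \<alpha>) x"
      proof (cases "dom x = ins s1 - {a} \<union> ins s2")
        case False thus ?thesis by (simp add: fn_par fn_conn0 I)
      next
        case True
        have dx1: "dom (x |` (ins s1 - {a})) = ins s1 - {a}" using True by auto
        have dx2: "dom (x |` ins s2) = ins s2" using True by auto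
        have dB: "dom (fn s2 (x |` ins s2)) = outs s2" using wf_dom[OF w2 dx2] .
        have N: "fn s2 (x |` ins s2) \<alpha> = None" using dB a2 by auto
        have r1: "(x(a \<mapsto> v)) |` ins s1 = (x |` (ins s1 - {a}))(a \<mapsto> v)" for v
          using a by (auto simp: restrict_map_def)
        have r2: "(x(a \<mapsto> v)) |` ins s2 = x |` ins s2" for v
          using a2 by (auto simp: restrict_map_def)
        have dv: "dom (x(a \<mapsto> v)) = ins s1 \<union> ins s2" for v using True a by auto
        have fpv: "fn (par s1 s2) (x(a \<mapsto> v)) = fn s1 ((x |` (ins s1 - {a}))(a \<mapsto> v)) ++ fn s2 (x |` ins s2)" for v
          using dv by (simp del: restrict_fun_upd fun_upd_restrict_conv add: fn_par r1 r2)
        have fv: "fixval (par s1 s2) x a \<alpha> = fixval s1 (x |` (ins s1 - {a})) a \<alpha>"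
          unfolding fixval_def fpv by (simp add: map_add_def N)
        define A where "A = fn s1 ((x |` (ins s1 - {a}))(a \<mapsto> fixval s1 (x |` (ins s1 - {a})) a \<alpha>))"
        have dI1: "dom ((x |` (ins s1 - {a}))(a \<mapsto> v)) = ins s1" for v using dx1 a by auto
        have dA: "dom A = outs s1" unfolding A_def by (rule wf_dom[OF w1 dI1])
        have "(A ++ fn s2 (x |` ins s2)) |` (outs s1 \<union> outs s2 - {\<alpha>}) = A |` (outs s1 - {\<alpha>}) ++ fn s2 (x |` ins s2)"
        proof
          fix l
          show "((A ++ fn s2 (x |` ins s2)) |` (outs s1 \<union> outs s2 - {\<alpha>})) l = (A |` (outs s1 - {\<alpha>}) ++ fn s2 (x |` ins s2)) l"
            using dA dB a2 by (cases "l \<in> outs s2"; cases "l \<in> outs s1")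
              (auto simp: restrict_map_def map_add_def split: option.split)
        qed
        note E = this
        have "fn (par (conn0 s1 a \<alpha>) s2) x = fn (conn0 s1 a \<alpha>) (x |` (ins s1 - {a})) ++ fn s2 (x |` ins s2)"
          using True by (simp add: fn_par)
        also have "\<dots> = A |` (outs s1 - {\<alpha>}) ++ fn s2 (x |` ins s2)"
          using dx1 by (simp del: restrict_fun_upd fun_upd_restrict_conv add: fn_conn0 A_def)
        also have "\<dots> = (A ++ fn s2 (x |` ins s2)) |` (outs s1 \<union> outs s2 - {\<alpha>})" using E by simp
        also have "\<dots> = fn (par s1 s2) (x(a \<mapsto> fixval (par s1 s2) x a \<alpha>)) |` (outs s1 \<union> outs s2 - {\<alpha>})"
          by (simp only: fpv fv A_def)
        also have "\<dots> = fn (conn0 (par s1 s2) a \<alpha>) x"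
          using True I by (simp del: restrict_fun_upd fun_upd_restrict_conv add: fn_conn0)
        finally show ?thesis .
      qed
    qed
  qed (use I O in auto)
qed


lemma coi_generic:
  fixes S :: "('l, 'x::order) sys set"
  assumes W: "\<And>s. s \<in> S \<Longrightarrow> wf_sys \<Lambda> s"
    and HB: "\<And>s a b \<alpha> \<beta> x. s \<in> S \<Longrightarrow> a \<in> ins s \<Longrightarrow> b \<in> ins s \<Longrightarrow> a \<noteq> b \<Longrightarrow> \<alpha> \<in> outs s \<Longrightarrow> \<beta> \<in> outs s \<Longrightarrow>
        dom x = ins s - {a} - {b} \<Longrightarrow>
        bek_concl (\<lambda>u w. the (fn s ((x(b \<mapsto> w))(a \<mapsto> u)) \<alpha>)) (\<lambda>u w. the (fn s ((x(b \<mapsto> w))(a \<mapsto> u)) \<beta>))"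
  shows "comp_order_invariant S"
proof -
  have P1: "\<forall>s\<in>S. \<forall>i o' i' o''. {i, o'} \<in> Gam s \<and> {i', o''} \<in> Gam (conn s i o') \<longrightarrow>
         {i', o''} \<in> Gam s \<and> {i, o'} \<in> Gam (conn s i' o'') \<and>
         conn (conn s i o') i' o'' = conn (conn s i' o'') i o'"
  proof (intro ballI allI impI)
    fix s i o' i' o'' assume s: "s \<in> S" and g: "{i, o'} \<in> Gam s \<and> {i', o''} \<in> Gam (conn s i o')"
    show "{i', o''} \<in> Gam s \<and> {i, o'} \<in> Gam (conn s i' o'') \<and> conn (conn s i o') i' o'' = conn (conn s i' o'') i o'"
      using g by (intro part_i[OF W[OF s] HB[OF s]]) auto
  qed
  have P2: "\<forall>s1\<in>S. \<forall>s2\<in>S. \<forall>s3\<in>S.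
         lam s1 \<inter> lam s2 = {} \<and> lam s1 \<inter> lam s3 = {} \<and> lam s2 \<inter> lam s3 = {} \<longrightarrow>
         par (par s1 s2) s3 = par s1 (par s2 s3)" by (simp add: par_assoc)
  have P3: "\<forall>s1\<in>S. \<forall>s2\<in>S. lam s1 \<inter> lam s2 = {} \<longrightarrow> par s1 s2 = par s2 s1"
  proof (intro ballI impI)
    fix s1 s2 assume a: "s1 \<in> S" "s2 \<in> S" "lam s1 \<inter> lam s2 = {}"
    show "par s1 s2 = par s2 s1" by (rule par_comm[OF W[OF a(1)] W[OF a(2)] a(3)])
  qed
  have P4: "\<forall>s1\<in>S. \<forall>s2\<in>S. \<forall>i o'. lam s1 \<inter> lam s2 = {} \<and> {i, o'} \<in> Gam s1 \<longrightarrow>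
         par (conn s1 i o') s2 = conn (par s1 s2) i o'"
  proof (intro ballI allI impI)
  fix s1 s2 i o' assume s1: "s1 \<in> S" and s2: "s2 \<in> S" and h: "lam s1 \<inter> lam s2 = {} \<and> {i, o'} \<in> Gam s1"
  have w1: "wf_sys \<Lambda> s1" and w2: "wf_sys \<Lambda> s2" using W[OF s1] W[OF s2] .
  have hl: "lam s1 \<inter> lam s2 = {}" and hg: "{i, o'} \<in> Gam s1" using h by simp_all
  obtain a \<alpha> where a: "a \<in> ins s1" "\<alpha> \<in> outs s1" "{i, o'} = {a, \<alpha>}" using hg by (rule Gam_E)
  have d1: "ins s1 \<inter> outs s1 = {}" using w1 unfolding wf_sys_def by (elim conjE)
  have d2: "ins s2 \<inter> outs s2 = {}" using w2 unfolding wf_sys_def by (elim conjE)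
  have dp: "ins (par s1 s2) \<inter> outs (par s1 s2) = {}" using d1 d2 hl unfolding lam_def ins_par outs_par by blast
  have "conn s1 i o' = conn0 s1 a \<alpha>" using conn_eq[OF d1 a] .
  moreover have "conn (par s1 s2) i o' = conn0 (par s1 s2) a \<alpha>"
    using conn_eq[OF dp _ _ a(3)] a by auto
  moreover have "par (conn0 s1 a \<alpha>) s2 = conn0 (par s1 s2) a \<alpha>"
    by (rule par_conn0[OF w1 w2 hl a(1,2)])
  ultimately show "par (conn s1 i o') s2 = conn (par s1 s2) i o'" by simp
  qed
  show ?thesis unfolding comp_order_invariant_def by (rule conjI[OF P1 conjI[OF P2 conjI[OF P3 P4]]])
qed

theorem theorem5p8:
  fixes \<Lambda> :: "'l set"
  assumes "nonempty_chains_have_inf TYPE('x::order)"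
  shows "(is_cpo TYPE('x) \<longrightarrow> comp_order_invariant (mono_sys \<Lambda> :: ('l, 'x) sys set)) \<and>
         (is_omega_cpo TYPE('x) \<longrightarrow> comp_order_invariant (cont_sys \<Lambda> :: ('l, 'x) sys set))"
proof (intro conjI impI)
  assume cpo: "is_cpo TYPE('x)"
  show "comp_order_invariant (mono_sys \<Lambda> :: ('l, 'x) sys set)"
  proof (rule coi_generic)
    fix s :: "('l, 'x) sys" assume "s \<in> mono_sys \<Lambda>"
    thus "wf_sys \<Lambda> s" unfolding mono_sys_def by blast
  next
    fix s :: "('l, 'x) sys" and a b \<alpha> \<beta> and x :: "'l \<rightharpoonup> 'x"
    assume s: "s \<in> mono_sys \<Lambda>" and h: "a \<in> ins s" "b \<in> ins s" "a \<noteq> b" "\<alpha> \<in> outs s" "\<beta> \<in> outs s"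
      "dom x = ins s - {a} - {b}"
    have wf: "wf_sys \<Lambda> s" using s unfolding mono_sys_def by blast
    show "bek_concl (\<lambda>u w. the (fn s ((x(b \<mapsto> w))(a \<mapsto> u)) \<alpha>)) (\<lambda>u w. the (fn s ((x(b \<mapsto> w))(a \<mapsto> u)) \<beta>))"
      by (rule BK_mono[OF cpo wf mono_sys_msys[OF s] h(6) h(1,2) h(4,5)])
  qed
next
  assume oc: "is_omega_cpo TYPE('x)"
  show "comp_order_invariant (cont_sys \<Lambda> :: ('l, 'x) sys set)"
  proof (rule coi_generic)
    fix s :: "('l, 'x) sys" assume "s \<in> cont_sys \<Lambda>"
    thus "wf_sys \<Lambda> s" unfolding cont_sys_def by blast
  next
    fix s :: "('l, 'x) sys" and a b \<alpha> \<beta> and x :: "'l \<rightharpoonup> 'x"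
    assume s: "s \<in> cont_sys \<Lambda>" and h: "a \<in> ins s" "b \<in> ins s" "a \<noteq> b" "\<alpha> \<in> outs s" "\<beta> \<in> outs s"
      "dom x = ins s - {a} - {b}"
    show "bek_concl (\<lambda>u w. the (fn s ((x(b \<mapsto> w))(a \<mapsto> u)) \<alpha>)) (\<lambda>u w. the (fn s ((x(b \<mapsto> w))(a \<mapsto> u)) \<beta>))"
      by (rule BK_cont[OF oc s h(6) h(1,2,3) h(4,5)])
  qed
qed

end
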